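(* Let $\mathcal{L}$ be a base in a set $X$. Then for every $\alpha<\omega_1$, $\mathcal{L}(T_\alpha)=D_\alpha(\mathcal{L})$, where a set $A\subseteq X$ is identified with the $2$-partition $X\to 2$ given by its characteristic function.
   Context: A base in $X$ is a collection $\mathcal{L}$ of subsets of $X$ closed under finite intersections and countable unions (including the empty intersection $X$ and the empty union $\emptyset$). An ordinal $\alpha=\lambda+n$ ($\lambda$ zero or limit, $n<\omega$) is even if $n$ is even and odd otherwise; $r(\alpha)=0$ if even, $1$ otherwise. $D_\alpha(\{A_\beta\}_{\beta<\alpha})=\bigcup\{A_\beta\setminus\bigcup_{\gamma<\beta}A_\gamma\mid\beta<\alpha,\ r(\beta)\neq r(\alpha)\}$, and $D_\alpha(\mathcal{L})$ is the set of all such sets with all $A_\beta\in\mathcal{L}$. A (countable) forest is a countable poset without infinite chains in which every upper cone $\{y\mid x\leq y\}$ is a chain; a tree is a forest with a greatest element (root). A $k$-forest is a forest $(P;\leq)$ with a labeling $c:P\to k=\{0,\dots,k-1\}$. For a $k$-forest $F$ and $i<k$, $p_i(F)$ is the $k$-tree obtained by adding a new greatest element labeled $i$; $F_0\sqcup F_1\sqcup\cdots$ is the disjoint union; for a $2$-forest $F$, $\overline{F}$ is obtained by replacing every label $l$ by $1-l$. The $2$-trees $T_\alpha$, $\alpha<\omega_1$: $T_0$ is a single node labeled $0$; $T_{\alpha+1}=p_0(\overline{T}_\alpha)$; for limit $\lambda$, $T_\lambda=p_0(\overline{T}_{\alpha_0}\sqcup\overline{T}_{\alpha_1}\sqcup\cdots)$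 for some (any) sequence $\alpha_0<\alpha_1<\cdots$ of odd ordinals with supremum $\lambda$. For a $k$-forest $(P;\leq,c)$, $\mathcal{L}(P)$ is the set of $k$-partitions $A:X\to k$ such that there are sets $B_p\in\mathcal{L}$ ($p\in P$) with $\bigcup_{p\in P}B_p=X$ and $A^{-1}(i)=\bigcup\{\tilde{B}_p\mid p\in P,\ c(p)=i\}$ for each $i<k$, where $\tilde{B}_p=B_p\setminus\bigcup_{q<p}B_q$. *)

theory Defs
  imports Main "HOL-Library.FuncSet" "HOL-Library.Countable_Set"
begin

definition is_base :: "'x set \<Rightarrow> 'x set set \<Rightarrow> bool" where
  "is_base X L \<longleftrightarrow> L \<subseteq> Pow X \<and> X \<in> L \<and>
     (\<forall>A\<in>L. \<forall>B\<in>L. A \<inter> B \<in> L) \<and>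
     (\<forall>C. C \<subseteq> L \<longrightarrow> countable C \<longrightarrow> \<Union>C \<in> L)"

section \<open>Countable ordinals, represented by elements of a countable well-order\<close>

text \<open>An element x of the field of a well-order r represents the ordinal
  given by the order type of its strict initial segment.\<close>

definition wlt :: "('a \<times> 'a) set \<Rightarrow> 'a \<Rightarrow> 'a \<Rightarrow> bool" where
  "wlt r y x \<longleftrightarrow> (y, x) \<in> r \<and> y \<noteq> x"

text \<open>If x represents lambda + n (lambda zero or limit), the set below has exactly n elements.\<close>
definition fin_part :: "('a \<times> 'a) set \<Rightarrow> 'a \<Rightarrow> nat" where
  "fin_part r x = card {y. wlt r y x \<and> finite {z. (y, z) \<in> r \<and> (z, x) \<in> r}}"

definition is_odd_el :: "('a \<times> 'a) set \<Rightarrow> 'a \<Rightarrow> bool" where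
  "is_odd_el r x \<longleftrightarrow> odd (fin_part r x)"

definition rpar :: "('a \<times> 'a) set \<Rightarrow> 'a \<Rightarrow> nat" where
  "rpar r x = (if is_odd_el r x then 1 else 0)"

definition is_zero_el :: "('a \<times> 'a) set \<Rightarrow> 'a \<Rightarrow> bool" where
  "is_zero_el r x \<longleftrightarrow> \<not> (\<exists>y. wlt r y x)"

definition immpred :: "('a \<times> 'a) set \<Rightarrow> 'a \<Rightarrow> 'a \<Rightarrow> bool" where
  "immpred r y x \<longleftrightarrow> wlt r y x \<and> \<not> (\<exists>z. wlt r y z \<and> wlt r z x)"

definition is_limit_el :: "('a \<times> 'a) set \<Rightarrow> 'a \<Rightarrow> bool" where
  "is_limit_el r x \<longleftrightarrow> (\<exists>y. wlt r y x) \<and> \<not> (\<exists>y. immpred r y x)"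

definition Dclass :: "'x set set \<Rightarrow> ('a \<times> 'a) set \<Rightarrow> 'a \<Rightarrow> 'x set set" where
  "Dclass L r x0 =
     { (\<Union>b \<in> {b. wlt r b x0 \<and> rpar r b \<noteq> rpar r x0}. A b - (\<Union>g \<in> {g. wlt r g b}. A g))
       | A. \<forall>b. wlt r b x0 \<longrightarrow> A b \<in> L }"

text \<open>A k-forest is given by a node set P, its partial order le and a labelling c.
  L(P) is the set of k-partitions A : X -> k (functions in X ->E {..<k}).\<close>

definition Lforest :: "nat \<Rightarrow> 'x set \<Rightarrow> 'x set set \<Rightarrow> 'n set \<Rightarrow> ('n \<Rightarrow> 'n \<Rightarrow> bool)
    \<Rightarrow> ('n \<Rightarrow> nat) \<Rightarrow> ('x \<Rightarrow> nat) set" where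
  "Lforest k X L P le c =
     {A \<in> X \<rightarrow>\<^sub>E {..<k}. \<exists>B. (\<forall>p\<in>P. B p \<in> L) \<and> (\<Union>p\<in>P. B p) = X \<and>
        (\<forall>i<k. {x\<in>X. A x = i} =
           (\<Union>p\<in>{p\<in>P. c p = i}. B p - (\<Union>q\<in>{q\<in>P. le q p \<and> q \<noteq> p}. B q)))}"

section \<open>Concrete labelled trees: nodes are nat lists (paths from the root [])\<close>

type_synonym ltree = "nat list set \<times> (nat list \<Rightarrow> nat)"

text \<open>Tree order: p \<le> q iff q is a prefix of p (the root [] is the greatest element).\<close>
definition tle :: "nat list \<Rightarrow> nat list \<Rightarrow> bool" where
  "tle p q \<longleftrightarrow> (\<exists>s. p = q @ s)"

definition treq :: "ltree \<Rightarrow> ltree \<Rightarrow> bool" where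
  "treq T S \<longleftrightarrow> fst T = fst S \<and> (\<forall>p\<in>fst T. snd T p = snd S p)"

definition single0 :: ltree where
  "single0 = ({[]}, \<lambda>_. 0)"

definition flip :: "ltree \<Rightarrow> ltree" where
  "flip T = (fst T, \<lambda>p. 1 - snd T p)"

definition p0_one :: "ltree \<Rightarrow> ltree" where
  "p0_one T = ({[]} \<union> {0 # p | p. p \<in> fst T},
               \<lambda>q. case q of [] \<Rightarrow> 0 | i # p \<Rightarrow> snd T p)"

text \<open>p_0 applied to the disjoint union of countably many trees Ts 0, Ts 1, ...\<close>
definition p0_seq :: "(nat \<Rightarrow> ltree) \<Rightarrow> ltree" where
  "p0_seq Ts = ({[]} \<union> {i # p | i p. p \<in> fst (Ts i)},
               \<lambda>q. case q of [] \<Rightarrow> 0 | i # p \<Rightarrow> snd (Ts i) p)"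

text \<open>t assigns to every element x of the field of r (i.e. every ordinal below the order
  type of r) a tree T_x satisfying the recursive definition of T_alpha, for an arbitrary
  choice of cofinal sequences of odd ordinals at limits.\<close>
definition Tfam :: "('a \<times> 'a) set \<Rightarrow> ('a \<Rightarrow> ltree) \<Rightarrow> bool" where
  "Tfam r t \<longleftrightarrow> (\<forall>x\<in>Field r.
     (is_zero_el r x \<longrightarrow> treq (t x) single0) \<and>
     (\<forall>y. immpred r y x \<longrightarrow> treq (t x) (p0_one (flip (t y)))) \<and>
     (is_limit_el r x \<longrightarrow> (\<exists>f :: nat \<Rightarrow> 'a.
         (\<forall>i. wlt r (f i) x \<and> is_odd_el r (f i) \<and> wlt r (f i) (f (Suc i))) \<and>
         (\<forall>y. wlt r y x \<longrightarrow> (\<exists>i. wlt r y (f i))) \<and>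
         treq (t x) (p0_seq (\<lambda>i. flip (t (f i)))))))"

end

theory Submission
  imports Defs
begin


lemma wo_basic:
  assumes "Well_order r"
  shows "refl_on (Field r) r" "trans r" "antisym r" "total_on (Field r) r"
  using assms unfolding well_order_on_def linear_order_on_def partial_order_on_def preorder_on_def
  by auto

lemma wo_least:
  assumes "Well_order r" "S \<subseteq> Field r" "S \<noteq> {}"
  shows "\<exists>a\<in>S. \<forall>a'\<in>S. (a, a') \<in> r"
  using assms wo_rel.minim_inField  Linear_order_wf_diff_Id
  by (metis (no_types, lifting) Linear_order_wf_diff_Id assms(1) well_order_on_def)

lemma wo_refl: "Well_order r \<Longrightarrow> x \<in> Field r \<Longrightarrow> (x,x) \<in> r"
  using wo_basic(1) by (metis refl_onD)
lemma wo_trans: "Well_order r \<Longrightarrow> (x,y) \<in> r \<Longrightarrow> (y,z) \<in> r \<Longrightarrow> (x,z) \<in> r"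
  using wo_basic(2) by (metis transD)
lemma wo_antisym: "Well_order r \<Longrightarrow> (x,y) \<in> r \<Longrightarrow> (y,x) \<in> r \<Longrightarrow> x = y"
  using wo_basic(3) by (metis antisymD)
lemma wo_total: "Well_order r \<Longrightarrow> x \<in> Field r \<Longrightarrow> y \<in> Field r \<Longrightarrow> (x,y) \<in> r \<or> (y,x) \<in> r"
  using wo_basic(4) wo_refl unfolding total_on_def by metis

lemma wlt_field: "wlt r y x \<Longrightarrow> y \<in> Field r \<and> x \<in> Field r"
  unfolding wlt_def by (auto simp: Field_def)

lemma wlt_trans1: "Well_order r \<Longrightarrow> wlt r x y \<Longrightarrow> (y,z) \<in> r \<Longrightarrow> wlt r x z"
  unfolding wlt_def using wo_trans wo_antisym by metis
lemma wlt_trans2: "Well_order r \<Longrightarrow> (x,y) \<in> r \<Longrightarrow> wlt r y z \<Longrightarrow> wlt r x z"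
  unfolding wlt_def using wo_trans wo_antisym by metis
lemma wlt_trich: "Well_order r \<Longrightarrow> x \<in> Field r \<Longrightarrow> y \<in> Field r \<Longrightarrow> wlt r x y \<or> x = y \<or> wlt r y x"
  unfolding wlt_def using wo_total by metis
lemma wlt_irr: "Well_order r \<Longrightarrow> wlt r x y \<Longrightarrow> (y,x) \<in> r \<Longrightarrow> False"
  unfolding wlt_def using wo_antisym by metis

definition Dset :: "('a \<times> 'a) set \<Rightarrow> ('a \<Rightarrow> 'x set) \<Rightarrow> 'a \<Rightarrow> 'x set" where
  "Dset r A x0 = (\<Union>b \<in> {b. wlt r b x0 \<and> rpar r b \<noteq> rpar r x0}. A b - (\<Union>g \<in> {g. wlt r g b}. A g))"

lemma first_entry:
  assumes "Well_order r" "(b,c) \<in> r" "p \<in> A b"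
  shows "\<exists>b0. (b0,c) \<in> r \<and> p \<in> A b0 \<and> (\<forall>g. wlt r g b0 \<longrightarrow> p \<notin> A g)"
proof -
  have "{b. (b,c) \<in> r \<and> p \<in> A b} \<subseteq> Field r" by (auto simp: Field_def)
  moreover have "{b. (b,c) \<in> r \<and> p \<in> A b} \<noteq> {}" using assms by auto
  ultimately obtain a where a: "(a,c) \<in> r" "p \<in> A a" "\<forall>a'\<in>{b. (b,c) \<in> r \<and> p \<in> A b}. (a,a') \<in> r"
    using wo_least[OF assms(1)] by blast
  show ?thesis
  proof (intro exI conjI allI impI)
    fix g assume "wlt r g a"
    then have "(g,c) \<in> r" using wo_trans[OF assms(1)] a(1) unfolding wlt_def by blast
    then show "p \<notin> A g" using a(3) \<open>wlt r g a\<close> wlt_irr[OF assms(1)] by blast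
  qed (use a in auto)
qed

lemma Dset_mem:
  assumes "Well_order r" "(b0,c) \<in> r" "p \<in> A b0" "\<forall>g. wlt r g b0 \<longrightarrow> p \<notin> A g"
  shows "p \<in> Dset r A c \<longleftrightarrow> wlt r b0 c \<and> rpar r b0 \<noteq> rpar r c"
proof
  assume "p \<in> Dset r A c"
  then obtain b where b: "wlt r b c" "rpar r b \<noteq> rpar r c" "p \<in> A b" "\<forall>g. wlt r g b \<longrightarrow> p \<notin> A g"
    unfolding Dset_def by blast
  have "b \<in> Field r" "b0 \<in> Field r" using wlt_field[OF b(1)] assms(2) by (auto simp: Field_def)
  then have "b = b0" using wlt_trich[OF assms(1)] b(3,4) assms(3,4) by blast
  then show "wlt r b0 c \<and> rpar r b0 \<noteq> rpar r c" using b by simp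
next
  assume "wlt r b0 c \<and> rpar r b0 \<noteq> rpar r c"
  then show "p \<in> Dset r A c" unfolding Dset_def using assms(3,4) by blast
qed

lemma Dset_sub: "Dset r A c \<subseteq> (\<Union>b\<in>{b. (b,c) \<in> r}. A b)"
  unfolding Dset_def wlt_def by blast


definition Fs :: "('a \<times> 'a) set \<Rightarrow> 'a \<Rightarrow> 'a set" where
  "Fs r x = {y. wlt r y x \<and> finite {z. (y, z) \<in> r \<and> (z, x) \<in> r}}"

lemma fin_part_Fs: "fin_part r x = card (Fs r x)"
  unfolding fin_part_def Fs_def by simp

lemma Fs_finite:
  assumes wo: "Well_order r"
  shows "finite (Fs r y)"
proof (cases "Fs r y = {}")
  case False
  have "Fs r y \<subseteq> Field r" unfolding Fs_def by (auto dest: wlt_field)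
  then obtain z0 where z0: "z0 \<in> Fs r y" "\<forall>a'\<in>Fs r y. (z0,a') \<in> r"
    using wo_least[OF wo _ False] by blast
  have "Fs r y \<subseteq> {z. (z0, z) \<in> r \<and> (z, y) \<in> r}"
    using z0(2) unfolding Fs_def wlt_def by blast
  moreover have "finite {z. (z0, z) \<in> r \<and> (z, y) \<in> r}" using z0(1) unfolding Fs_def by blast
  ultimately show ?thesis by (rule finite_subset)
qed simp

lemma Fs_succ:
  assumes wo: "Well_order r" and ip: "immpred r y x"
  shows "Fs r x = insert y (Fs r y)" "y \<notin> Fs r y"
proof -
  have yx: "wlt r y x" and nb: "\<not> (\<exists>z. wlt r y z \<and> wlt r z x)" using ip unfolding immpred_def by auto
  show "y \<notin> Fs r y" unfolding Fs_def wlt_def by simp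
  show "Fs r x = insert y (Fs r y)"
  proof (intro equalityI subsetI)
    fix z assume z: "z \<in> Fs r x"
    then have zx: "wlt r z x" and fin: "finite {w. (z, w) \<in> r \<and> (w, x) \<in> r}" unfolding Fs_def by auto
    have "z \<in> Field r" "y \<in> Field r" using wlt_field[OF zx] wlt_field[OF yx] by auto
    then consider "z = y" | "wlt r z y" | "wlt r y z" using wlt_trich[OF wo] by blast
    then show "z \<in> insert y (Fs r y)"
    proof cases
      case 2
      have "{w. (z, w) \<in> r \<and> (w, y) \<in> r} \<subseteq> {w. (z, w) \<in> r \<and> (w, x) \<in> r}"
        using yx wo_trans[OF wo] unfolding wlt_def by blast
      then have "finite {w. (z, w) \<in> r \<and> (w, y) \<in> r}" using fin finite_subset by blast
      then show ?thesis using 2 unfolding Fs_def by blast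
    next
      case 3 then show ?thesis using nb zx by blast
    qed simp
  next
    fix z assume z: "z \<in> insert y (Fs r y)"
    show "z \<in> Fs r x"
    proof (cases "z = y")
      case True
      have "{w. (y, w) \<in> r \<and> (w, x) \<in> r} \<subseteq> {y, x}"
        using nb unfolding wlt_def by blast
      then show ?thesis using True yx finite_subset unfolding Fs_def by blast
    next
      case False
      then have zy: "wlt r z y" and fin: "finite {w. (z, w) \<in> r \<and> (w, y) \<in> r}" using z unfolding Fs_def by auto
      have "{w. (z, w) \<in> r \<and> (w, x) \<in> r} \<subseteq> insert x {w. (z, w) \<in> r \<and> (w, y) \<in> r}"
      proof
        fix w assume w: "w \<in> {w. (z, w) \<in> r \<and> (w, x) \<in> r}"
        then have "w \<in> Field r" "y \<in> Field r" using wlt_field[OF yx] by (auto simp: Field_def)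
        then consider "w = y" | "wlt r w y" | "wlt r y w" using wlt_trich[OF wo] by blast
        then show "w \<in> insert x {w. (z, w) \<in> r \<and> (w, y) \<in> r}"
        proof cases
          case 1 then show ?thesis using w wo_refl[OF wo] \<open>y \<in> Field r\<close> by auto
        next
          case 2 then show ?thesis using w unfolding wlt_def by auto
        next
          case 3 then show ?thesis using w nb unfolding wlt_def by auto
        qed
      qed
      then have "finite {w. (z, w) \<in> r \<and> (w, x) \<in> r}" using fin finite_subset by blast
      moreover have "wlt r z x" using zy yx wlt_trans1[OF wo] unfolding wlt_def by blast
      ultimately show ?thesis unfolding Fs_def by blast
    qed
  qed
qed

lemma rpar_succ:
  assumes wo: "Well_order r" and ip: "immpred r y x"
  shows "rpar r x \<noteq> rpar r y"
proof -
  have "fin_part r x = Suc (fin_part r y)"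
    using Fs_succ[OF wo ip] Fs_finite[OF wo] unfolding fin_part_Fs by simp
  then show ?thesis unfolding rpar_def is_odd_el_def by auto
qed

lemma finite_max_r:
  assumes wo: "Well_order r"
  shows "finite I \<Longrightarrow> I \<subseteq> Field r \<Longrightarrow> I \<noteq> {} \<Longrightarrow> \<exists>m\<in>I. \<forall>w\<in>I. (w,m) \<in> r"
proof (induction I rule: finite_induct)
  case (insert a I)
  show ?case
  proof (cases "I = {}")
    case True then show ?thesis using insert wo_refl[OF wo] by auto
  next
    case False
    then obtain m where m: "m \<in> I" "\<forall>w\<in>I. (w,m) \<in> r" using insert by auto
    have "a \<in> Field r" "m \<in> Field r" using insert m by auto
    then have "(a,m) \<in> r \<or> (m,a) \<in> r" using wo_total[OF wo] by blast
    then show ?thesis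
    proof
      assume "(a,m) \<in> r" then show ?thesis using m by auto
    next
      assume "(m,a) \<in> r" then show ?thesis using m wo_trans[OF wo] wo_refl[OF wo] insert by blast
    qed
  qed
qed simp

lemma rpar_limit:
  assumes wo: "Well_order r" and lim: "is_limit_el r x"
  shows "rpar r x = 0"
proof -
  have "Fs r x = {}"
  proof (rule ccontr)
    assume "Fs r x \<noteq> {}"
    then obtain z where zx: "wlt r z x" and fin: "finite {w. (z, w) \<in> r \<and> (w, x) \<in> r}" unfolding Fs_def by auto
    let ?I = "{w. (z, w) \<in> r \<and> wlt r w x}"
    have "finite ?I" using fin by (rule finite_subset[rotated]) (auto simp: wlt_def)
    moreover have "?I \<subseteq> Field r" by (auto simp: Field_def)
    moreover have "z \<in> ?I" using zx wo_refl[OF wo] wlt_field[OF zx] by blast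
    ultimately obtain m where m: "m \<in> ?I" "\<forall>w\<in>?I. (w,m) \<in> r" using finite_max_r[OF wo] by blast
    then have "\<not> immpred r m x" using lim unfolding is_limit_el_def by blast
    then obtain v where v: "wlt r m v" "wlt r v x" using m unfolding immpred_def by auto
    then have "v \<in> ?I" using m wo_trans[OF wo] unfolding wlt_def by blast
    then show False using m(2) v(1) wlt_irr[OF wo] by blast
  qed
  then show ?thesis unfolding rpar_def is_odd_el_def fin_part_Fs by simp
qed



definition reg :: "nat list set \<Rightarrow> (nat list \<Rightarrow> 'x set) \<Rightarrow> nat list \<Rightarrow> 'x set" where
  "reg P B p = B p - (\<Union>q\<in>{q\<in>P. tle q p \<and> q \<noteq> p}. B q)"

definition Gen :: "'x set set \<Rightarrow> ltree \<Rightarrow> ('x set \<times> 'x set) set" where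
  "Gen L T = {(S,U). \<exists>B. (\<forall>p\<in>fst T. B p \<in> L) \<and> U = (\<Union>p\<in>fst T. B p)
      \<and> S = (\<Union>p\<in>{p\<in>fst T. snd T p = 1}. reg (fst T) B p)
      \<and> U - S = (\<Union>p\<in>{p\<in>fst T. snd T p \<noteq> 1}. reg (fst T) B p)}"

definition Cov :: "nat list set \<Rightarrow> bool" where
  "Cov P \<longleftrightarrow> (\<forall>B::nat list \<Rightarrow> nat set. \<forall>p\<in>P. B p \<subseteq> (\<Union>q\<in>{q\<in>P. tle q p}. reg P B q))"

definition lab :: "ltree \<Rightarrow> bool" where
  "lab T \<longleftrightarrow> (\<forall>p\<in>fst T. snd T p \<le> 1)"

lemma reg_sub: "reg P B p \<subseteq> B p" unfolding reg_def by blast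

lemma Cov_gen:
  assumes "Cov P" "p \<in> P" "x \<in> B p"
  shows "\<exists>q\<in>P. tle q p \<and> x \<in> reg P B q"
proof -
  let ?B = "\<lambda>q. if x \<in> B q then {0::nat} else {}"
  have c: "\<forall>B::nat list \<Rightarrow> nat set. \<forall>p\<in>P. B p \<subseteq> (\<Union>q\<in>{q\<in>P. tle q p}. reg P B q)"
    using assms(1) unfolding Cov_def .
  have "?B p \<subseteq> (\<Union>q\<in>{q\<in>P. tle q p}. reg P ?B q)" using spec[OF c, of ?B] assms(2) by blast
  moreover have "0 \<in> ?B p" using assms(3) by simp
  ultimately obtain q where q: "q \<in> P" "0 \<in> reg P ?B q" "tle q p" by blast
  have "x \<in> B q" using q(2) unfolding reg_def by (simp split: if_splits)
  moreover have "x \<notin> B q'" if "q' \<in> P" "tle q' q" "q' \<noteq> q" for q'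
    using q(2) that unfolding reg_def by (auto split: if_splits)
  ultimately have "x \<in> reg P B q" unfolding reg_def by blast
  then show ?thesis using q by blast
qed

lemma Gen_treq:
  assumes "treq T T'"
  shows "Gen L T = Gen L T'"
proof -
  have f: "fst T' = fst T" using assms unfolding treq_def by simp
  have a: "{p\<in>fst T. snd T p = 1} = {p\<in>fst T'. snd T' p = 1}"
    "{p\<in>fst T. snd T p \<noteq> 1} = {p\<in>fst T'. snd T' p \<noteq> 1}"
    using assms unfolding treq_def by auto
  show ?thesis unfolding Gen_def f a ..
qed

lemma lab_treq: "treq T T' \<Longrightarrow> lab T' \<Longrightarrow> lab T"
  unfolding treq_def lab_def by auto

lemma Cov_single: "Cov {[]}"
  unfolding Cov_def reg_def tle_def by auto

lemma GenI:
  assumes "\<forall>p\<in>fst T. B p \<in> L" "U = (\<Union>p\<in>fst T. B p)"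
    "S = (\<Union>p\<in>{p\<in>fst T. snd T p = 1}. reg (fst T) B p)"
    "U - S = (\<Union>p\<in>{p\<in>fst T. snd T p \<noteq> 1}. reg (fst T) B p)"
  shows "(S,U) \<in> Gen L T"
  unfolding Gen_def using assms by blast

lemma GenE:
  assumes "(S,U) \<in> Gen L T"
  obtains B where "\<forall>p\<in>fst T. B p \<in> L" "U = (\<Union>p\<in>fst T. B p)"
    "S = (\<Union>p\<in>{p\<in>fst T. snd T p = 1}. reg (fst T) B p)"
    "U - S = (\<Union>p\<in>{p\<in>fst T. snd T p \<noteq> 1}. reg (fst T) B p)"
  using assms unfolding Gen_def by blast

lemma Gen_sub: "(S,U) \<in> Gen L T \<Longrightarrow> S \<subseteq> U"
  by (erule GenE) (use reg_sub in fastforce)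

lemma Gen_single0: "(S,U) \<in> Gen L single0 \<longleftrightarrow> S = {} \<and> U \<in> L"
proof -
  have r: "reg {[]} B [] = B []" for B :: "nat list \<Rightarrow> 'x set" unfolding reg_def tle_def by auto
  have e: "{p \<in> {[]}. (0::nat) = 1} = {}" "{p \<in> {[]::nat list}. (0::nat) \<noteq> 1} = {[]}" by auto
  show ?thesis
  proof
    assume "(S,U) \<in> Gen L single0"
    then show "S = {} \<and> U \<in> L"
      by (rule GenE) (simp_all add: single0_def e r)
  next
    assume "S = {} \<and> U \<in> L"
    then show "(S,U) \<in> Gen L single0"
      by (intro GenI[where B="\<lambda>_. U"]) (simp_all add: single0_def e r)
  qed
qed

lemma Gen_iff: "(S,U) \<in> Gen L T \<longleftrightarrow> (\<exists>B. (\<forall>p\<in>fst T. B p \<in> L) \<and> U = (\<Union>p\<in>fst T. B p)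
      \<and> S = (\<Union>p\<in>{p\<in>fst T. snd T p = 1}. reg (fst T) B p)
      \<and> U - S = (\<Union>p\<in>{p\<in>fst T. snd T p \<noteq> 1}. reg (fst T) B p))"
  unfolding Gen_def by simp

lemma Gen_flip:
  assumes "lab T"
  shows "(S,U) \<in> Gen L (flip T) \<longleftrightarrow> S \<subseteq> U \<and> (U - S, U) \<in> Gen L T"
proof -
  have lb: "\<forall>p\<in>fst T. snd T p \<le> 1" using assms unfolding lab_def by blast
  have a1: "{p\<in>fst (flip T). snd (flip T) p = 1} = {p\<in>fst T. snd T p \<noteq> 1}"
    using lb unfolding flip_def by auto
  have a2: "{p\<in>fst (flip T). snd (flip T) p \<noteq> 1} = {p\<in>fst T. snd T p = 1}"
    using lb unfolding flip_def by auto
  have f: "fst (flip T) = fst T" unfolding flip_def by simp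
  have "(S,U) \<in> Gen L (flip T) \<longleftrightarrow> (\<exists>B. (\<forall>p\<in>fst T. B p \<in> L) \<and> U = (\<Union>p\<in>fst T. B p)
      \<and> S = (\<Union>p\<in>{p\<in>fst T. snd T p \<noteq> 1}. reg (fst T) B p)
      \<and> U - S = (\<Union>p\<in>{p\<in>fst T. snd T p = 1}. reg (fst T) B p))"
    unfolding Gen_iff a1 a2 unfolding f ..
  also have "\<dots> \<longleftrightarrow> S \<subseteq> U \<and> (U - S, U) \<in> Gen L T"
  proof
    assume "\<exists>B. (\<forall>p\<in>fst T. B p \<in> L) \<and> U = (\<Union>p\<in>fst T. B p)
      \<and> S = (\<Union>p\<in>{p\<in>fst T. snd T p \<noteq> 1}. reg (fst T) B p)
      \<and> U - S = (\<Union>p\<in>{p\<in>fst T. snd T p = 1}. reg (fst T) B p)"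
    then obtain B where z: "\<forall>p\<in>fst T. B p \<in> L" "U = (\<Union>p\<in>fst T. B p)"
      "S = (\<Union>p\<in>{p\<in>fst T. snd T p \<noteq> 1}. reg (fst T) B p)"
      "U - S = (\<Union>p\<in>{p\<in>fst T. snd T p = 1}. reg (fst T) B p)" by blast
    have su: "S \<subseteq> U" using z(2,3) reg_sub by fastforce
    then have e: "U - (U - S) = S" by blast
    have "(U - S, U) \<in> Gen L T" unfolding Gen_iff
      by (rule exI[of _ B]) (intro conjI z(1) z(2) z(4), metis e z(3))
    then show "S \<subseteq> U \<and> (U - S, U) \<in> Gen L T" using su by simp
  next
    assume g: "S \<subseteq> U \<and> (U - S, U) \<in> Gen L T"
    then have e: "U - (U - S) = S" by blast
    obtain B where z: "\<forall>p\<in>fst T. B p \<in> L" "U = (\<Union>p\<in>fst T. B p)"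
      "U - S = (\<Union>p\<in>{p\<in>fst T. snd T p = 1}. reg (fst T) B p)"
      "U - (U - S) = (\<Union>p\<in>{p\<in>fst T. snd T p \<noteq> 1}. reg (fst T) B p)"
      using g[THEN conjunct2] by (rule GenE)
    show "\<exists>B. (\<forall>p\<in>fst T. B p \<in> L) \<and> U = (\<Union>p\<in>fst T. B p)
      \<and> S = (\<Union>p\<in>{p\<in>fst T. snd T p \<noteq> 1}. reg (fst T) B p)
      \<and> U - S = (\<Union>p\<in>{p\<in>fst T. snd T p = 1}. reg (fst T) B p)"
      by (rule exI[of _ B]) (intro conjI z(1) z(2) z(3), metis e z(4))
  qed
  finally show ?thesis .
qed

lemma lab_flip: "lab (flip T)" unfolding lab_def flip_def by auto
lemma Cov_flip: "fst (flip T) = fst T" unfolding flip_def by auto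



lemma p0seq_mem: "p \<in> fst (p0_seq Ts) \<longleftrightarrow> p = [] \<or> (\<exists>i q. p = i#q \<and> q \<in> fst (Ts i))"
  unfolding p0_seq_def by auto

lemma p0seq_Nil: "[] \<in> fst (p0_seq Ts)" unfolding p0_seq_def by auto
lemma p0seq_Cons: "i#q \<in> fst (p0_seq Ts) \<longleftrightarrow> q \<in> fst (Ts i)" unfolding p0_seq_def by auto
lemma p0seq_lbl: "snd (p0_seq Ts) [] = 0" "snd (p0_seq Ts) (i#q) = snd (Ts i) q"
  unfolding p0_seq_def by auto

lemma tle_Cons: "tle (i#q') (j#q) \<longleftrightarrow> i = j \<and> tle q' q" unfolding tle_def by auto
lemma tle_Nil: "tle p []" unfolding tle_def by auto
lemma tle_Nil2: "tle [] (j#q) \<longleftrightarrow> False" unfolding tle_def by auto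

lemma UN_p0seq:
  "(\<Union>p\<in>{p\<in>fst (p0_seq Ts). Q p}. F p) =
     (if Q [] then F [] else {}) \<union> (\<Union>i. \<Union>q\<in>{q\<in>fst (Ts i). Q (i#q)}. F (i#q))"
  (is "?l = ?r")
proof (intro equalityI subsetI)
  fix x assume "x \<in> ?l"
  then obtain p where p: "p \<in> fst (p0_seq Ts)" "Q p" "x \<in> F p" by blast
  from p(1) consider "p = []" | i q where "p = i#q" "q \<in> fst (Ts i)" unfolding p0seq_mem by blast
  then show "x \<in> ?r" proof cases
    case 1 then show ?thesis using p by simp
  next
    case 2 then show ?thesis using p by blast
  qed
next
  fix x assume "x \<in> ?r"
  then consider "Q []" "x \<in> F []" | i q where "q \<in> fst (Ts i)" "Q (i#q)" "x \<in> F (i#q)"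
    by (auto split: if_splits)
  then show "x \<in> ?l"
  proof cases
    case 1 then show ?thesis using p0seq_Nil by blast
  next
    case 2
    then have "i#q \<in> {p\<in>fst (p0_seq Ts). Q p}" using p0seq_Cons by simp
    then show ?thesis using 2 by blast
  qed
qed

lemma UN_p0seq_all:
  "(\<Union>p\<in>fst (p0_seq Ts). F p) = F [] \<union> (\<Union>i. \<Union>q\<in>fst (Ts i). F (i#q))"
  using UN_p0seq[where Q="\<lambda>_. True" and F=F and Ts=Ts] by simp

lemma reg_cons:
  "reg (fst (p0_seq Ts)) B (i#q) = reg (fst (Ts i)) (\<lambda>q. B (i#q)) q"
proof -
  have "{q' \<in> fst (p0_seq Ts). tle q' (i#q) \<and> q' \<noteq> i#q} =
        (\<lambda>q''. i#q'') ` {q''\<in>fst (Ts i). tle q'' q \<and> q'' \<noteq> q}"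
  proof (intro equalityI subsetI)
    fix q' assume a: "q' \<in> {q' \<in> fst (p0_seq Ts). tle q' (i#q) \<and> q' \<noteq> i#q}"
    then obtain j q'' where "q' = j#q''" unfolding tle_def by auto
    then show "q' \<in> (\<lambda>q''. i#q'') ` {q''\<in>fst (Ts i). tle q'' q \<and> q'' \<noteq> q}"
      using a by (auto simp: tle_Cons p0seq_Cons)
  qed (auto simp: tle_Cons p0seq_Cons)
  then show ?thesis unfolding reg_def by simp
qed

lemma reg_root:
  "reg (fst (p0_seq Ts)) B [] = B [] - (\<Union>i. \<Union>q\<in>fst (Ts i). B (i#q))"
proof -
  have "{q' \<in> fst (p0_seq Ts). tle q' [] \<and> q' \<noteq> []} = {q'. \<exists>i q. q' = i#q \<and> q \<in> fst (Ts i)}"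
    unfolding p0seq_mem tle_def by auto
  then show ?thesis unfolding reg_def by auto
qed

lemma lab_p0seq: assumes "\<And>i. lab (Ts i)" shows "lab (p0_seq Ts)"
  unfolding lab_def
proof
  fix p assume "p \<in> fst (p0_seq Ts)"
  then consider "p = []" | i q where "p = i#q" "q \<in> fst (Ts i)" unfolding p0seq_mem by blast
  then show "snd (p0_seq Ts) p \<le> 1"
    by cases (use assms in \<open>auto simp: p0seq_lbl lab_def\<close>)
qed

lemma Cov_p0seq:
  assumes "\<And>i. Cov (fst (Ts i))"
  shows "Cov (fst (p0_seq Ts))"
  unfolding Cov_def
proof (intro allI ballI subsetI)
  fix B :: "nat list \<Rightarrow> nat set" and p x
  assume p: "p \<in> fst (p0_seq Ts)" and x: "x \<in> B p"
  let ?R = "\<Union>q\<in>{q\<in>fst (p0_seq Ts). tle q p}. reg (fst (p0_seq Ts)) B q"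
  from p consider "p = []" | i q where "p = i#q" "q \<in> fst (Ts i)" unfolding p0seq_mem by blast
  then show "x \<in> ?R"
  proof cases
    case 1
    show ?thesis
    proof (cases "\<exists>i. \<exists>q\<in>fst (Ts i). x \<in> B (i#q)")
      case True
      then obtain i q where iq: "q \<in> fst (Ts i)" "x \<in> B (i#q)" by blast
      then obtain q' where q': "q' \<in> fst (Ts i)" "x \<in> reg (fst (Ts i)) (\<lambda>q. B (i#q)) q'"
        using Cov_gen[OF assms[of i], where p=q and B="\<lambda>q. B (i#q)"] by auto
      then show ?thesis unfolding reg_cons[symmetric] using 1
        by (intro UN_I[of "i#q'"]) (auto simp: p0seq_Cons tle_Nil)
    next
      case False
      then have "x \<in> reg (fst (p0_seq Ts)) B []" unfolding reg_root using x 1 by blast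
      then show ?thesis using 1 p0seq_Nil tle_Nil by blast
    qed
  next
    case 2
    then obtain q' where q': "q' \<in> fst (Ts i)" "tle q' q" "x \<in> reg (fst (Ts i)) (\<lambda>q. B (i#q)) q'"
      using Cov_gen[OF assms[of i], where p=q and B="\<lambda>q. B (i#q)"] x by auto
    then show ?thesis unfolding reg_cons[symmetric] using 2
      by (intro UN_I[of "i#q'"]) (auto simp: p0seq_Cons tle_Cons)
  qed
qed



lemma UN_reg_cons:
  "(\<Union>q\<in>{q\<in>fst (Ts i). Q q}. reg (fst (p0_seq Ts)) B (i#q)) =
   (\<Union>q\<in>{q\<in>fst (Ts i). Q q}. reg (fst (Ts i)) (\<lambda>q. B (i#q)) q)"
  by (simp add: reg_cons)

lemma Gen_p0seq:
  assumes lab: "\<And>i. lab (Ts i)" and cov: "\<And>i. Cov (fst (Ts i))"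
  shows "(S,U) \<in> Gen L (p0_seq Ts) \<longleftrightarrow>
    (\<exists>SS UU B0. B0 \<in> L \<and> (\<forall>i. (SS i, UU i) \<in> Gen L (Ts i)) \<and> (\<forall>i j. SS i \<inter> UU j \<subseteq> SS j)
        \<and> S = (\<Union>i. SS i) \<and> U = B0 \<union> (\<Union>i. UU i))"
proof
  assume "(S,U) \<in> Gen L (p0_seq Ts)"
  then obtain B where B: "\<forall>p\<in>fst (p0_seq Ts). B p \<in> L" "U = (\<Union>p\<in>fst (p0_seq Ts). B p)"
    "S = (\<Union>p\<in>{p\<in>fst (p0_seq Ts). snd (p0_seq Ts) p = 1}. reg (fst (p0_seq Ts)) B p)"
    "U - S = (\<Union>p\<in>{p\<in>fst (p0_seq Ts). snd (p0_seq Ts) p \<noteq> 1}. reg (fst (p0_seq Ts)) B p)"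
    by (rule GenE)
  define Bi where "Bi i = (\<lambda>q. B (i#q))" for i
  define SS where "SS i = (\<Union>q\<in>{q\<in>fst (Ts i). snd (Ts i) q = 1}. reg (fst (Ts i)) (Bi i) q)" for i
  define ZZ where "ZZ i = (\<Union>q\<in>{q\<in>fst (Ts i). snd (Ts i) q \<noteq> 1}. reg (fst (Ts i)) (Bi i) q)" for i
  define UU where "UU i = (\<Union>q\<in>fst (Ts i). Bi i q)" for i
  have S: "S = (\<Union>i. SS i)"
    unfolding B(3) UN_p0seq p0seq_lbl SS_def Bi_def by (simp add: reg_cons)
  have U: "U = B [] \<union> (\<Union>i. UU i)"
    unfolding B(2) UN_p0seq_all UU_def Bi_def by simp
  have US: "U - S = reg (fst (p0_seq Ts)) B [] \<union> (\<Union>i. ZZ i)"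
    unfolding B(4) UN_p0seq p0seq_lbl ZZ_def Bi_def by (simp add: reg_cons)
  have cover: "x \<in> SS i \<or> x \<in> ZZ i" if "x \<in> UU i" for x i
  proof -
    from that obtain q where q: "q \<in> fst (Ts i)" "x \<in> Bi i q" unfolding UU_def by blast
    then obtain q' where "q' \<in> fst (Ts i)" "x \<in> reg (fst (Ts i)) (Bi i) q'"
      using Cov_gen[OF cov[of i], where p=q and B="Bi i"] by blast
    then show ?thesis unfolding SS_def ZZ_def by blast
  qed
  have SSU: "SS i \<subseteq> UU i" for i unfolding SS_def UU_def using reg_sub by fastforce
  have ZZU: "ZZ i \<subseteq> UU i" for i unfolding ZZ_def UU_def using reg_sub by fastforce
  have ZS: "ZZ i \<inter> SS j = {}" for i j
  proof -
    have "ZZ i \<subseteq> U - S" using US by blast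
    moreover have "SS j \<subseteq> S" using S by blast
    ultimately show ?thesis by blast
  qed
  have gi: "(SS i, UU i) \<in> Gen L (Ts i)" for i
  proof (rule GenI[where B="Bi i"])
    show "\<forall>p\<in>fst (Ts i). Bi i p \<in> L" using B(1) p0seq_Cons unfolding Bi_def by blast
    show "UU i = \<Union> (Bi i ` fst (Ts i))" unfolding UU_def ..
    show "SS i = (\<Union>p\<in>{p\<in>fst (Ts i). snd (Ts i) p = 1}. reg (fst (Ts i)) (Bi i) p)" unfolding SS_def ..
    have "UU i - SS i = ZZ i" using cover[of _ i] ZZU[of i] ZS[of i i] by blast
    then show "UU i - SS i = (\<Union>p\<in>{p\<in>fst (Ts i). snd (Ts i) p \<noteq> 1}. reg (fst (Ts i)) (Bi i) p)"
      unfolding ZZ_def .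
  qed
  have cons: "SS i \<inter> UU j \<subseteq> SS j" for i j
    using cover[of _ j] ZS[of j i] by blast
  show "\<exists>SS UU B0. B0 \<in> L \<and> (\<forall>i. (SS i, UU i) \<in> Gen L (Ts i)) \<and> (\<forall>i j. SS i \<inter> UU j \<subseteq> SS j)
        \<and> S = (\<Union>i. SS i) \<and> U = B0 \<union> (\<Union>i. UU i)"
    apply (rule exI[of _ SS], rule exI[of _ UU], rule exI[of _ "B []"])
    using gi cons S U B(1) p0seq_Nil by simp
next
  assume "\<exists>SS UU B0. B0 \<in> L \<and> (\<forall>i. (SS i, UU i) \<in> Gen L (Ts i)) \<and> (\<forall>i j. SS i \<inter> UU j \<subseteq> SS j)
        \<and> S = (\<Union>i. SS i) \<and> U = B0 \<union> (\<Union>i. UU i)"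
  then obtain SS UU B0 where h: "B0 \<in> L" "\<forall>i. (SS i, UU i) \<in> Gen L (Ts i)" "\<forall>i j. SS i \<inter> UU j \<subseteq> SS j"
    "S = (\<Union>i. SS i)" "U = B0 \<union> (\<Union>i. UU i)" by blast
  have "\<forall>i. \<exists>Bw. (\<forall>p\<in>fst (Ts i). Bw p \<in> L) \<and> UU i = (\<Union>p\<in>fst (Ts i). Bw p)
    \<and> SS i = (\<Union>p\<in>{p\<in>fst (Ts i). snd (Ts i) p = 1}. reg (fst (Ts i)) Bw p)
    \<and> UU i - SS i = (\<Union>p\<in>{p\<in>fst (Ts i). snd (Ts i) p \<noteq> 1}. reg (fst (Ts i)) Bw p)"
  proof
    fix i
    from h(2) have "(SS i, UU i) \<in> Gen L (Ts i)" ..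
    then show "\<exists>Bw. (\<forall>p\<in>fst (Ts i). Bw p \<in> L) \<and> UU i = (\<Union>p\<in>fst (Ts i). Bw p)
    \<and> SS i = (\<Union>p\<in>{p\<in>fst (Ts i). snd (Ts i) p = 1}. reg (fst (Ts i)) Bw p)
    \<and> UU i - SS i = (\<Union>p\<in>{p\<in>fst (Ts i). snd (Ts i) p \<noteq> 1}. reg (fst (Ts i)) Bw p)"
      by (simp only: Gen_iff)
  qed
  from choice[OF this] obtain Bw where Bw0: "\<forall>i. (\<forall>p\<in>fst (Ts i). Bw i p \<in> L) \<and> UU i = (\<Union>p\<in>fst (Ts i). Bw i p)
    \<and> SS i = (\<Union>p\<in>{p\<in>fst (Ts i). snd (Ts i) p = 1}. reg (fst (Ts i)) (Bw i) p)
    \<and> UU i - SS i = (\<Union>p\<in>{p\<in>fst (Ts i). snd (Ts i) p \<noteq> 1}. reg (fst (Ts i)) (Bw i) p)" by (elim exE)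
  have Bw: "\<And>i. (\<forall>p\<in>fst (Ts i). Bw i p \<in> L)" "\<And>i. UU i = (\<Union>p\<in>fst (Ts i). Bw i p)"
    "\<And>i. SS i = (\<Union>p\<in>{p\<in>fst (Ts i). snd (Ts i) p = 1}. reg (fst (Ts i)) (Bw i) p)"
    "\<And>i. UU i - SS i = (\<Union>p\<in>{p\<in>fst (Ts i). snd (Ts i) p \<noteq> 1}. reg (fst (Ts i)) (Bw i) p)"
    using Bw0 by blast+
  define B where "B p = (case p of [] \<Rightarrow> B0 | i#q \<Rightarrow> Bw i q)" for p
  have Bc: "(\<lambda>q. B (i#q)) = Bw i" for i unfolding B_def by simp
  have B0: "B [] = B0" unfolding B_def by simp
  have Bcons: "B (i#q) = Bw i q" for i q unfolding B_def by simp
  show "(S,U) \<in> Gen L (p0_seq Ts)"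
  proof (rule GenI[where B=B])
    show "\<forall>p\<in>fst (p0_seq Ts). B p \<in> L"
    proof
      fix p assume "p \<in> fst (p0_seq Ts)"
      then consider "p = []" | i q where "p = i#q" "q \<in> fst (Ts i)" unfolding p0seq_mem by blast
      then show "B p \<in> L" by cases (use h(1) Bw(1) in \<open>auto simp: B_def\<close>)
    qed
    show "U = (\<Union>p\<in>fst (p0_seq Ts). B p)"
      unfolding UN_p0seq_all h(5) B0 using Bw(2) Bc by (simp add: B_def)
    show "S = (\<Union>p\<in>{p\<in>fst (p0_seq Ts). snd (p0_seq Ts) p = 1}. reg (fst (p0_seq Ts)) B p)"
      unfolding UN_p0seq p0seq_lbl h(4) using Bw(3) by (simp add: reg_cons Bc)
    have "(\<Union>p\<in>{p\<in>fst (p0_seq Ts). snd (p0_seq Ts) p \<noteq> 1}. reg (fst (p0_seq Ts)) B p)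
       = (B0 - (\<Union>i. UU i)) \<union> (\<Union>i. UU i - SS i)"
      unfolding UN_p0seq p0seq_lbl reg_root B0 using Bw(2,4) by (simp add: reg_cons Bc Bcons)
    also have "\<dots> = U - S" unfolding h(4,5)
    proof (intro equalityI subsetI)
      fix x assume x: "x \<in> (B0 - (\<Union>i. UU i)) \<union> (\<Union>i. UU i - SS i)"
      have ss: "SS j \<subseteq> UU j" for j using h(2) Gen_sub by blast
      show "x \<in> B0 \<union> (\<Union>i. UU i) - (\<Union>i. SS i)"
      proof (cases "x \<in> B0 - (\<Union>i. UU i)")
        case True then show ?thesis using ss by blast
      next
        case False
        then obtain i where i: "x \<in> UU i" "x \<notin> SS i" using x by blast
        have "x \<notin> SS j" for j using h(3) i by blast
        then show ?thesis using i by blast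
      qed
    next
      fix x assume x: "x \<in> B0 \<union> (\<Union>i. UU i) - (\<Union>i. SS i)"
      show "x \<in> (B0 - (\<Union>i. UU i)) \<union> (\<Union>i. UU i - SS i)"
      proof (cases "\<exists>i. x \<in> UU i")
        case True then show ?thesis using x by blast
      next
        case False then show ?thesis using x by blast
      qed
    qed
    finally show "U - S = (\<Union>p\<in>{p\<in>fst (p0_seq Ts). snd (p0_seq Ts) p \<noteq> 1}. reg (fst (p0_seq Ts)) B p)" ..
  qed
qed



lemma Gen_empty: "(S,U) \<in> Gen L ({}, c) \<longleftrightarrow> S = {} \<and> U = {}"
  unfolding Gen_iff by auto

lemma lab_empty: "lab ({}, c)" unfolding lab_def by simp
lemma Cov_empty: "Cov {}" unfolding Cov_def by simp

definition p0ts :: "ltree \<Rightarrow> nat \<Rightarrow> ltree" where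
  "p0ts T i = (if i = 0 then T else ({}, snd T))"

lemma p0_one_treq: "treq (p0_one T) (p0_seq (p0ts T))"
  unfolding treq_def p0_one_def p0_seq_def p0ts_def
  by (auto split: list.splits if_splits)

lemma lab_p0ts: "lab T \<Longrightarrow> lab (p0ts T i)" unfolding p0ts_def using lab_empty by auto
lemma Cov_p0ts: "Cov (fst T) \<Longrightarrow> Cov (fst (p0ts T i))" unfolding p0ts_def using Cov_empty by auto

lemma lab_p0one: "lab T \<Longrightarrow> lab (p0_one T)"
  using lab_treq[OF p0_one_treq lab_p0seq[OF lab_p0ts]] by blast

lemma Cov_p0one: "Cov (fst T) \<Longrightarrow> Cov (fst (p0_one T))"
proof -
  assume "Cov (fst T)"
  then have "Cov (fst (p0_seq (p0ts T)))" by (intro Cov_p0seq Cov_p0ts)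
  moreover have "fst (p0_one T) = fst (p0_seq (p0ts T))" using p0_one_treq unfolding treq_def by blast
  ultimately show ?thesis by simp
qed

lemma Gen_p0one:
  assumes lab: "lab T" and cov: "Cov (fst T)"
  shows "(S,U) \<in> Gen L (p0_one T) \<longleftrightarrow> (\<exists>U0 B0. B0 \<in> L \<and> (S,U0) \<in> Gen L T \<and> U = B0 \<union> U0)"
proof -
  have "(S,U) \<in> Gen L (p0_one T) \<longleftrightarrow> (S,U) \<in> Gen L (p0_seq (p0ts T))"
    by (subst Gen_treq[OF p0_one_treq]) (rule refl)
  also have "\<dots> \<longleftrightarrow> (\<exists>SS UU B0. B0 \<in> L \<and> (\<forall>i. (SS i, UU i) \<in> Gen L (p0ts T i)) \<and> (\<forall>i j. SS i \<inter> UU j \<subseteq> SS j)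
        \<and> S = (\<Union>i. SS i) \<and> U = B0 \<union> (\<Union>i. UU i))"
    by (rule Gen_p0seq[OF lab_p0ts[OF lab] Cov_p0ts[OF cov]])
  also have "\<dots> \<longleftrightarrow> (\<exists>U0 B0. B0 \<in> L \<and> (S,U0) \<in> Gen L T \<and> U = B0 \<union> U0)"
  proof
    assume "\<exists>SS UU B0. B0 \<in> L \<and> (\<forall>i. (SS i, UU i) \<in> Gen L (p0ts T i)) \<and> (\<forall>i j. SS i \<inter> UU j \<subseteq> SS j)
        \<and> S = (\<Union>i. SS i) \<and> U = B0 \<union> (\<Union>i. UU i)"
    then obtain SS UU B0 where h: "B0 \<in> L" "\<forall>i. (SS i, UU i) \<in> Gen L (p0ts T i)"
        "S = (\<Union>i. SS i)" "U = B0 \<union> (\<Union>i. UU i)" by blast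
    have e: "SS i = {} \<and> UU i = {}" if "i \<noteq> 0" for i
    proof -
      have "(SS i, UU i) \<in> Gen L ({}, snd T)" using h(2)[rule_format, of i] that unfolding p0ts_def by simp
      then show ?thesis by (simp only: Gen_empty)
    qed
    have "(\<Union>i. SS i) = SS 0" "(\<Union>i. UU i) = UU 0"
      using e by (auto, metis empty_iff)+
    moreover have "(SS 0, UU 0) \<in> Gen L T" using h(2)[rule_format, of 0] unfolding p0ts_def by simp
    ultimately show "\<exists>U0 B0. B0 \<in> L \<and> (S,U0) \<in> Gen L T \<and> U = B0 \<union> U0" using h by auto
  next
    assume "\<exists>U0 B0. B0 \<in> L \<and> (S,U0) \<in> Gen L T \<and> U = B0 \<union> U0"
    then obtain U0 B0 where h: "B0 \<in> L" "(S,U0) \<in> Gen L T" "U = B0 \<union> U0" by blast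
    let ?SS = "\<lambda>i. if i = 0 then S else {}" and ?UU = "\<lambda>i. if i = 0 then U0 else {}"
    have "\<forall>i. (?SS i, ?UU i) \<in> Gen L (p0ts T i)"
    proof
      fix i show "(?SS i, ?UU i) \<in> Gen L (p0ts T i)"
      proof (cases "i = 0")
        case True then show ?thesis using h(2) unfolding p0ts_def by simp
      next
        case False
        have "({}, {}) \<in> Gen L ({}, snd T)" by (simp only: Gen_empty)
        then show ?thesis using False unfolding p0ts_def by simp
      qed
    qed
    moreover have "\<forall>i j. ?SS i \<inter> ?UU j \<subseteq> ?SS j" by auto
    moreover have "S = (\<Union>i. ?SS i)" "U = B0 \<union> (\<Union>i. ?UU i)" using h(3) by auto
    ultimately show "\<exists>SS UU B0. B0 \<in> L \<and> (\<forall>i. (SS i, UU i) \<in> Gen L (p0ts T i)) \<and> (\<forall>i j. SS i \<inter> UU j \<subseteq> SS j)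
        \<and> S = (\<Union>i. SS i) \<and> U = B0 \<union> (\<Union>i. UU i)"
      apply (rule_tac exI[of _ ?SS], rule_tac exI[of _ ?UU], rule_tac exI[of _ B0])
      using h(1) by simp
  qed
  finally show ?thesis .
qed



definition GD :: "'x set set \<Rightarrow> ('a \<times> 'a) set \<Rightarrow> 'a \<Rightarrow> ('x set \<times> 'x set) set" where
  "GD L r x = {(S,U). \<exists>A. (\<forall>b. (b,x)\<in>r \<longrightarrow> A b \<in> L) \<and> S = Dset r A x \<and> U = (\<Union>b\<in>{b. (b,x)\<in>r}. A b)}"

lemma GD_iff: "(S,U) \<in> GD L r x \<longleftrightarrow> (\<exists>A. (\<forall>b. (b,x)\<in>r \<longrightarrow> A b \<in> L) \<and> S = Dset r A x \<and> U = (\<Union>b\<in>{b. (b,x)\<in>r}. A b))"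
  unfolding GD_def by simp

lemma rpar01: "rpar r x = 0 \<or> rpar r x = 1" unfolding rpar_def by simp

lemma Dset_cong:
  assumes wo: "Well_order r" and "\<And>b. wlt r b c \<Longrightarrow> A b = A' b"
  shows "Dset r A c = Dset r A' c"
proof -
  have H: "\<And>b g. wlt r b c \<Longrightarrow> wlt r g b \<Longrightarrow> A g = A' g"
    using assms(2) wlt_trans1[OF wo] unfolding wlt_def by blast
  show ?thesis unfolding Dset_def
  proof (rule SUP_cong[OF refl])
    fix b assume "b \<in> {b. wlt r b c \<and> rpar r b \<noteq> rpar r c}"
    then have b: "wlt r b c" by simp
    have "(\<Union>g\<in>{g. wlt r g b}. A g) = (\<Union>g\<in>{g. wlt r g b}. A' g)"
      by (rule SUP_cong[OF refl]) (use H b in simp)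
    then show "A b - (\<Union>g\<in>{g. wlt r g b}. A g) = A' b - (\<Union>g\<in>{g. wlt r g b}. A' g)"
      using assms(2)[OF b] by simp
  qed
qed

lemma first_le:
  assumes wo: "Well_order r" and "p \<in> A b0" "\<forall>g. wlt r g b0 \<longrightarrow> p \<notin> A g" "p \<in> A b"
    "b0 \<in> Field r" "b \<in> Field r"
  shows "(b0,b) \<in> r"
  using wlt_trich[OF wo assms(5,6)] assms(2-4) wo_refl[OF wo assms(5)] unfolding wlt_def by blast

lemma GD_zero:
  fixes L :: "'x set set"
  assumes wo: "Well_order r" and z: "is_zero_el r x" and x: "x \<in> Field r"
  shows "(S,U) \<in> GD L r x \<longleftrightarrow> S = {} \<and> U \<in> L"
proof -
  have e: "{b. (b,x) \<in> r} = {x}" using z wo_refl[OF wo x] unfolding is_zero_el_def wlt_def by blast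
  have d: "Dset r A x = {}" for A :: "_ \<Rightarrow> 'x set" using z unfolding is_zero_el_def Dset_def by blast
  show ?thesis
  proof
    assume "(S,U) \<in> GD L r x"
    then obtain A where A: "\<forall>b. (b,x)\<in>r \<longrightarrow> A b \<in> L" "S = Dset r A x" "U = (\<Union>b\<in>{b. (b,x)\<in>r}. A b)"
      unfolding GD_iff by blast
    then show "S = {} \<and> U \<in> L" using e d wo_refl[OF wo x] by simp
  next
    assume h: "S = {} \<and> U \<in> L"
    show "(S,U) \<in> GD L r x" unfolding GD_iff
      by (rule exI[of _ "\<lambda>_. U"]) (use h e d in simp)
  qed
qed

lemma succ_le:
  assumes wo: "Well_order r" and ip: "immpred r y x"
  shows "(b,x) \<in> r \<longleftrightarrow> b = x \<or> (b,y) \<in> r"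
proof -
  have yx: "wlt r y x" and nb: "\<not> (\<exists>z. wlt r y z \<and> wlt r z x)" using ip unfolding immpred_def by auto
  show ?thesis
  proof
    assume bx: "(b,x) \<in> r"
    show "b = x \<or> (b,y) \<in> r"
    proof (cases "b = x")
      case False
      then have "wlt r b x" using bx unfolding wlt_def by simp
      moreover have "b \<in> Field r" "y \<in> Field r" using bx wlt_field[OF yx] by (auto simp: Field_def)
      ultimately show ?thesis using wlt_trich[OF wo] nb wo_refl[OF wo] unfolding wlt_def by metis
    qed simp
  next
    assume "b = x \<or> (b,y) \<in> r"
    then show "(b,x) \<in> r"
      using yx wo_trans[OF wo] wo_refl[OF wo] wlt_field[OF yx] unfolding wlt_def by blast
  qed
qed

lemma succ_wlt:
  assumes wo: "Well_order r" and ip: "immpred r y x"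
  shows "wlt r b x \<longleftrightarrow> (b,y) \<in> r"
proof -
  have yx: "wlt r y x" using ip unfolding immpred_def by auto
  have "(b,y) \<in> r \<Longrightarrow> b \<noteq> x" using yx wlt_irr[OF wo] wo_trans[OF wo] unfolding wlt_def by blast
  then show ?thesis using succ_le[OF wo ip, of b] unfolding wlt_def by blast
qed

lemma succ_D:
  assumes wo: "Well_order r" and ip: "immpred r y x"
  shows "Dset r A x = (\<Union>b\<in>{b. (b,y)\<in>r}. A b) - Dset r A y"
proof (intro equalityI subsetI)
  fix p assume p: "p \<in> Dset r A x"
  then obtain b where b: "wlt r b x" "p \<in> A b" unfolding Dset_def by blast
  then have bY: "(b,y) \<in> r" using succ_wlt[OF wo ip] by blast
  obtain b0 where b0: "(b0,y) \<in> r" "p \<in> A b0" "\<forall>g. wlt r g b0 \<longrightarrow> p \<notin> A g"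
    using first_entry[where A=A, OF wo bY b(2)] by blast
  have b0x: "(b0,x) \<in> r" using succ_le[OF wo ip] b0(1) by blast
  have "wlt r b0 x \<and> rpar r b0 \<noteq> rpar r x" using Dset_mem[OF wo b0x b0(2,3)] p by blast
  then have "rpar r b0 = rpar r y" using rpar_succ[OF wo ip] rpar01[of r] by metis
  then have "p \<notin> Dset r A y" using Dset_mem[OF wo b0] by blast
  then show "p \<in> (\<Union>b\<in>{b. (b,y)\<in>r}. A b) - Dset r A y" using b0 by blast
next
  fix p assume p: "p \<in> (\<Union>b\<in>{b. (b,y)\<in>r}. A b) - Dset r A y"
  then obtain b where b: "(b,y) \<in> r" "p \<in> A b" by blast
  obtain b0 where b0: "(b0,y) \<in> r" "p \<in> A b0" "\<forall>g. wlt r g b0 \<longrightarrow> p \<notin> A g"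
    using first_entry[where A=A, OF wo b] by blast
  have b0x: "(b0,x) \<in> r" using succ_le[OF wo ip] b0(1) by blast
  have n: "\<not> (wlt r b0 y \<and> rpar r b0 \<noteq> rpar r y)" using Dset_mem[OF wo b0] p by blast
  have "rpar r b0 = rpar r y"
  proof (cases "b0 = y")
    case False then show ?thesis using n b0(1) unfolding wlt_def by blast
  qed simp
  then have "rpar r b0 \<noteq> rpar r x" using rpar_succ[OF wo ip] by simp
  moreover have "wlt r b0 x" using succ_wlt[OF wo ip] b0(1) by blast
  ultimately show "p \<in> Dset r A x" using Dset_mem[OF wo b0x b0(2,3)] by blast
qed

lemma Dset_sub2: "Dset r A x \<subseteq> (\<Union>b\<in>{b. wlt r b x}. A b)"
  unfolding Dset_def by blast

lemma succ_set:
  assumes wo: "Well_order r" and ip: "immpred r y x"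
  shows "{b. (b,x)\<in>r} = insert x {b. (b,y)\<in>r}"
  using succ_le[OF wo ip] by blast

lemma GD_succ:
  assumes wo: "Well_order r" and ip: "immpred r y x"
  shows "(S,U) \<in> GD L r x \<longleftrightarrow> (\<exists>U0 B0. B0 \<in> L \<and> S \<subseteq> U0 \<and> (U0 - S, U0) \<in> GD L r y \<and> U = B0 \<union> U0)"
proof
  assume "(S,U) \<in> GD L r x"
  then obtain A where A: "\<forall>b. (b,x)\<in>r \<longrightarrow> A b \<in> L" "S = Dset r A x" "U = (\<Union>b\<in>{b. (b,x)\<in>r}. A b)"
    unfolding GD_iff by blast
  have AL: "A b \<in> L" if "b = x \<or> (b,y) \<in> r" for b using A(1) succ_le[OF wo ip, of b] that by blast
  let ?U0 = "\<Union>b\<in>{b. (b,y)\<in>r}. A b"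
  have S: "S = ?U0 - Dset r A y" using A(2) succ_D[OF wo ip] by simp
  have sub: "Dset r A y \<subseteq> ?U0" using Dset_sub .
  have e: "?U0 - S = Dset r A y" using S sub by blast
  have "(?U0 - S, ?U0) \<in> GD L r y" unfolding GD_iff
    by (rule exI[of _ A]) (use AL e in simp)
  moreover have "U = A x \<union> ?U0" using A(3) succ_set[OF wo ip] by simp
  moreover have "A x \<in> L" using AL by simp
  moreover have "S \<subseteq> ?U0" using S by blast
  ultimately show "\<exists>U0 B0. B0 \<in> L \<and> S \<subseteq> U0 \<and> (U0 - S, U0) \<in> GD L r y \<and> U = B0 \<union> U0"
    by blast
next
  assume "\<exists>U0 B0. B0 \<in> L \<and> S \<subseteq> U0 \<and> (U0 - S, U0) \<in> GD L r y \<and> U = B0 \<union> U0"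
  then obtain U0 B0 where h: "B0 \<in> L" "S \<subseteq> U0" "(U0 - S, U0) \<in> GD L r y" "U = B0 \<union> U0" by blast
  from h(3) obtain A where A: "\<forall>b. (b,y)\<in>r \<longrightarrow> A b \<in> L" "U0 - S = Dset r A y" "U0 = (\<Union>b\<in>{b. (b,y)\<in>r}. A b)"
    unfolding GD_iff by blast
  define A' where "A' = A(x := B0)"
  have xy: "(x,y) \<notin> r" using ip wlt_irr[OF wo] unfolding immpred_def by blast
  have agree: "A' b = A b" if "(b,y) \<in> r" for b using that xy unfolding A'_def by auto
  have Dy: "Dset r A' y = Dset r A y"
    by (rule Dset_cong[OF wo]) (use agree in \<open>auto simp: wlt_def\<close>)
  have U0': "U0 = (\<Union>b\<in>{b. (b,y)\<in>r}. A' b)" using A(3) agree by simp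
  have A'L: "A' b \<in> L" if "b = x \<or> (b,y) \<in> r" for b using that A(1) h(1) agree unfolding A'_def by auto
  show "(S,U) \<in> GD L r x" unfolding GD_iff
  proof (intro exI[of _ A'] conjI)
    show "\<forall>b. (b, x) \<in> r \<longrightarrow> A' b \<in> L" using A'L succ_le[OF wo ip] by simp
    have "Dset r A' x = U0 - Dset r A y" using succ_D[OF wo ip, of A'] Dy U0' by simp
    then show "S = Dset r A' x" using A(2) h(2) by blast
    show "U = (\<Union>b\<in>{b. (b,x)\<in>r}. A' b)" using h(4) U0' succ_set[OF wo ip] unfolding A'_def by simp
  qed
qed



lemma Dset_odd:
  assumes wo: "Well_order r" and c: "rpar r c = 1" and b0: "(b0,c)\<in>r" "p \<in> A b0" "\<forall>g. wlt r g b0 \<longrightarrow> p \<notin> A g"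
  shows "p \<in> Dset r A c \<longleftrightarrow> rpar r b0 \<noteq> 1"
proof -
  have "p \<in> Dset r A c \<longleftrightarrow> wlt r b0 c \<and> rpar r b0 \<noteq> rpar r c" by (rule Dset_mem[OF wo b0])
  moreover have "b0 = c \<or> wlt r b0 c" using b0(1) unfolding wlt_def by blast
  ultimately show ?thesis using c by auto
qed

lemma first_below:
  assumes wo: "Well_order r" and "p \<in> A b0" "\<forall>g. wlt r g b0 \<longrightarrow> p \<notin> A g" "b0 \<in> Field r"
    "p \<in> A b" "(b,c) \<in> r"
  shows "(b0,c) \<in> r"
proof -
  have "b \<in> Field r" using assms(6) by (auto simp: Field_def)
  then have "(b0,b) \<in> r" using first_le[OF wo assms(2,3,5,4)] by blast
  then show ?thesis using wo_trans[OF wo] assms(6) by blast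
qed

lemma field_of: "(b,c) \<in> r \<Longrightarrow> b \<in> Field r" by (auto simp: Field_def)

lemma GD_limit:
  fixes L :: "'x set set"
  assumes wo: "Well_order r" and lim: "is_limit_el r x"
    and f: "\<forall>i. wlt r (f i) x \<and> is_odd_el r (f i) \<and> wlt r (f i) (f (Suc i))"
    and cof: "\<forall>y. wlt r y x \<longrightarrow> (\<exists>i. wlt r y (f i))"
    and base: "is_base X L"
  shows "(S,U) \<in> GD L r x \<longleftrightarrow> (\<exists>SS UU B0. B0 \<in> L \<and> (\<forall>i. SS i \<subseteq> UU i \<and> (UU i - SS i, UU i) \<in> GD L r (f i))
      \<and> (\<forall>i j. SS i \<inter> UU j \<subseteq> SS j) \<and> S = (\<Union>i. SS i) \<and> U = B0 \<union> (\<Union>i. UU i))"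
proof -
  have rx: "rpar r x = 0" by (rule rpar_limit[OF wo lim])
  have rf: "rpar r (f i) = 1" for i using f unfolding rpar_def by simp
  have fx: "wlt r (f i) x" for i using f by blast
  have lefx: "(b,x) \<in> r" "wlt r b x" if "(b, f i) \<in> r" for b i
    using wlt_trans2[OF wo that fx[of i]] unfolding wlt_def by auto
  have xF: "x \<in> Field r" using wlt_field[OF fx[of 0]] by blast
  have xx: "(x,x) \<in> r" using wo_refl[OF wo xF] .
  show ?thesis
  proof
    assume "(S,U) \<in> GD L r x"
    then obtain A where A: "\<forall>b. (b,x)\<in>r \<longrightarrow> A b \<in> L" "S = Dset r A x" "U = (\<Union>b\<in>{b. (b,x)\<in>r}. A b)"
      unfolding GD_iff by blast
    define UU where "UU i = (\<Union>b\<in>{b. (b,f i)\<in>r}. A b)" for i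
    define SS where "SS i = UU i - Dset r A (f i)" for i
    have key: "p \<in> SS i \<longleftrightarrow> rpar r b0 = 1"
      if "(b0, f i) \<in> r" "p \<in> A b0" "\<forall>g. wlt r g b0 \<longrightarrow> p \<notin> A g" for p i b0
    proof -
      have "p \<in> UU i" unfolding UU_def using that(1,2) by blast
      then show ?thesis unfolding SS_def using Dset_odd[OF wo rf that] by blast
    qed
    have first: "\<exists>b0. (b0, f i) \<in> r \<and> p \<in> A b0 \<and> (\<forall>g. wlt r g b0 \<longrightarrow> p \<notin> A g)" if pu: "p \<in> UU i" for p i
    proof -
      obtain b where b: "(b, f i) \<in> r" "p \<in> A b" using pu unfolding UU_def by blast
      show ?thesis by (rule first_entry[where A=A, OF wo b])
    qed
    have g1: "SS i \<subseteq> UU i \<and> (UU i - SS i, UU i) \<in> GD L r (f i)" for i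
    proof
      show "SS i \<subseteq> UU i" unfolding SS_def by blast
      have "UU i - SS i = Dset r A (f i)" unfolding SS_def UU_def using Dset_sub[of r A "f i"] by blast
      moreover have "\<forall>b. (b, f i)\<in>r \<longrightarrow> A b \<in> L" using A(1) lefx by blast
      ultimately show "(UU i - SS i, UU i) \<in> GD L r (f i)" unfolding GD_iff UU_def by blast
    qed
    have g2: "SS i \<inter> UU j \<subseteq> SS j" for i j
    proof
      fix p assume p: "p \<in> SS i \<inter> UU j"
      then have "p \<in> UU i" unfolding SS_def by blast
      then obtain b0 where b0: "(b0, f i) \<in> r" "p \<in> A b0" "\<forall>g. wlt r g b0 \<longrightarrow> p \<notin> A g" using first by blast
      have "rpar r b0 = 1" using key[OF b0] p by blast
      obtain b where b: "(b, f j) \<in> r" "p \<in> A b" using p unfolding UU_def by blast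
      have "(b0, f j) \<in> r" by (rule first_below[where A=A, OF wo b0(2,3) field_of[OF b0(1)] b(2) b(1)])
      then show "p \<in> SS j" using key[of b0 j p] b0 \<open>rpar r b0 = 1\<close> by blast
    qed
    have g3: "S = (\<Union>i. SS i)"
    proof (intro equalityI subsetI)
      fix p assume "p \<in> S"
      then have p: "p \<in> Dset r A x" using A(2) by simp
      then obtain b where b: "wlt r b x" "p \<in> A b" unfolding Dset_def by blast
      then have bx: "(b,x) \<in> r" unfolding wlt_def by blast
      obtain b0 where b0: "(b0, x) \<in> r" "p \<in> A b0" "\<forall>g. wlt r g b0 \<longrightarrow> p \<notin> A g"
        using first_entry[where A=A, OF wo bx b(2)] by blast
      have "wlt r b0 x \<and> rpar r b0 \<noteq> rpar r x" using Dset_mem[OF wo b0] p by blast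
      then have w: "wlt r b0 x" "rpar r b0 = 1" using rx rpar01[of r b0] by auto
      obtain i where "wlt r b0 (f i)" using cof w(1) by blast
      then have "(b0, f i) \<in> r" unfolding wlt_def by blast
      then have "p \<in> SS i" using key b0(2,3) w(2) by blast
      then show "p \<in> (\<Union>i. SS i)" by blast
    next
      fix p assume "p \<in> (\<Union>i. SS i)"
      then obtain i where p: "p \<in> SS i" by blast
      then have "p \<in> UU i" unfolding SS_def by blast
      then obtain b0 where b0: "(b0, f i) \<in> r" "p \<in> A b0" "\<forall>g. wlt r g b0 \<longrightarrow> p \<notin> A g" using first by blast
      have "rpar r b0 = 1" using key[OF b0] p by blast
      moreover have "(b0,x) \<in> r" "wlt r b0 x" using lefx[OF b0(1)] by auto
      ultimately have "p \<in> Dset r A x" using Dset_mem[where A=A, OF wo _ b0(2,3)] rx by simp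
      then show "p \<in> S" using A(2) by simp
    qed
    have g4: "U = A x \<union> (\<Union>i. UU i)"
    proof -
      have e: "{b. (b,x) \<in> r} = insert x (\<Union>i. {b. (b, f i) \<in> r})"
      proof (intro equalityI subsetI)
        fix b assume "b \<in> {b. (b,x) \<in> r}"
        then have "b = x \<or> wlt r b x" unfolding wlt_def by blast
        then show "b \<in> insert x (\<Union>i. {b. (b, f i) \<in> r})" using cof unfolding wlt_def by blast
      next
        fix b assume "b \<in> insert x (\<Union>i. {b. (b, f i) \<in> r})"
        then show "b \<in> {b. (b,x) \<in> r}" using xx lefx by blast
      qed
      have "U = (\<Union>b\<in>insert x (\<Union>i. {b. (b, f i) \<in> r}). A b)" using A(3) e by simp
      also have "\<dots> = A x \<union> (\<Union>i. \<Union>b\<in>{b. (b, f i) \<in> r}. A b)" by auto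
      finally show ?thesis unfolding UU_def .
    qed
    have "A x \<in> L" using A(1) xx by blast
    then show "\<exists>SS UU B0. B0 \<in> L \<and> (\<forall>i. SS i \<subseteq> UU i \<and> (UU i - SS i, UU i) \<in> GD L r (f i))
      \<and> (\<forall>i j. SS i \<inter> UU j \<subseteq> SS j) \<and> S = (\<Union>i. SS i) \<and> U = B0 \<union> (\<Union>i. UU i)"
      apply (rule_tac exI[of _ SS], rule_tac exI[of _ UU], rule_tac exI[of _ "A x"])
      using g1 g2 g3 g4 by simp
  next
    assume "\<exists>SS UU B0. B0 \<in> L \<and> (\<forall>i. SS i \<subseteq> UU i \<and> (UU i - SS i, UU i) \<in> GD L r (f i))
      \<and> (\<forall>i j. SS i \<inter> UU j \<subseteq> SS j) \<and> S = (\<Union>i. SS i) \<and> U = B0 \<union> (\<Union>i. UU i)"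
    then obtain SS UU B0 where h: "B0 \<in> L" "\<forall>i. SS i \<subseteq> UU i \<and> (UU i - SS i, UU i) \<in> GD L r (f i)"
      "\<forall>i j. SS i \<inter> UU j \<subseteq> SS j" "S = (\<Union>i. SS i)" "U = B0 \<union> (\<Union>i. UU i)" by blast
    have "\<forall>i. \<exists>Ai. (\<forall>b. (b,f i)\<in>r \<longrightarrow> Ai b \<in> L) \<and> UU i - SS i = Dset r Ai (f i) \<and> UU i = (\<Union>b\<in>{b. (b,f i)\<in>r}. Ai b)"
    proof
      fix i
      have "(UU i - SS i, UU i) \<in> GD L r (f i)" using h(2) by blast
      then show "\<exists>Ai. (\<forall>b. (b,f i)\<in>r \<longrightarrow> Ai b \<in> L) \<and> UU i - SS i = Dset r Ai (f i) \<and> UU i = (\<Union>b\<in>{b. (b,f i)\<in>r}. Ai b)"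
        by (simp only: GD_iff)
    qed
    from choice[OF this] obtain AA where AA0: "\<forall>i. (\<forall>b. (b,f i)\<in>r \<longrightarrow> AA i b \<in> L) \<and> UU i - SS i = Dset r (AA i) (f i)
        \<and> UU i = (\<Union>b\<in>{b. (b,f i)\<in>r}. AA i b)" by (elim exE)
    have AAL: "AA i b \<in> L" if "(b,f i)\<in>r" for i b using AA0 that by blast
    have AAD: "UU i - SS i = Dset r (AA i) (f i)" for i using AA0 by blast
    have AAU: "UU i = (\<Union>b\<in>{b. (b,f i)\<in>r}. AA i b)" for i using AA0 by blast
    have SU: "SS i \<subseteq> UU i" for i using h(2) by blast
    define A where "A b = (if b = x then B0 else (\<Union>i\<in>{i. (b, f i) \<in> r}. AA i b))" for b
    have Ax: "A x = B0" unfolding A_def by simp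
    have Ab: "A b = (\<Union>i\<in>{i. (b, f i) \<in> r}. AA i b)" if "b \<noteq> x" for b unfolding A_def using that by simp
    have nx: "b \<noteq> x" if "(b, f i) \<in> r" for b i using lefx[OF that] unfolding wlt_def by blast
    have AL: "\<forall>b. (b,x)\<in>r \<longrightarrow> A b \<in> L"
    proof (intro allI impI)
      fix b assume "(b,x) \<in> r"
      show "A b \<in> L"
      proof (cases "b = x")
        case True then show ?thesis using Ax h(1) by simp
      next
        case False
        let ?C = "(\<lambda>i. AA i b) ` {i. (b, f i) \<in> r}"
        have "?C \<subseteq> L" using AAL by blast
        moreover have "countable ?C" by simp
        ultimately have "\<Union>?C \<in> L" using base unfolding is_base_def by blast
        then show ?thesis using Ab[OF False] by simp
      qed
    qed
    have eqU: "U = (\<Union>b\<in>{b. (b,x)\<in>r}. A b)"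
    proof -
      have "(\<Union>b\<in>{b. (b,x)\<in>r}. A b) = A x \<union> (\<Union>b\<in>{b. (b,x)\<in>r \<and> b \<noteq> x}. A b)"
        using xx by blast
      also have "(\<Union>b\<in>{b. (b,x)\<in>r \<and> b \<noteq> x}. A b) = (\<Union>i. UU i)"
      proof (intro equalityI subsetI)
        fix p assume "p \<in> (\<Union>b\<in>{b. (b,x)\<in>r \<and> b \<noteq> x}. A b)"
        then obtain b where b: "(b,x)\<in>r" "b \<noteq> x" "p \<in> A b" by blast
        then obtain i where "(b, f i) \<in> r" "p \<in> AA i b" using Ab[OF b(2)] by blast
        then show "p \<in> (\<Union>i. UU i)" using AAU[of i] by blast
      next
        fix p assume "p \<in> (\<Union>i. UU i)"
        then obtain i b where b: "(b, f i) \<in> r" "p \<in> AA i b" using AAU by blast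
        then have "p \<in> A b" using Ab[OF nx[OF b(1)]] by blast
        moreover have "(b,x) \<in> r" "b \<noteq> x" using lefx[OF b(1)] nx[OF b(1)] by auto
        ultimately show "p \<in> (\<Union>b\<in>{b. (b,x)\<in>r \<and> b \<noteq> x}. A b)" by blast
      qed
      finally show ?thesis using h(5) Ax by simp
    qed
    have eqS: "p \<in> S \<longleftrightarrow> p \<in> Dset r A x" for p
    proof (cases "\<exists>i b. (b, f i) \<in> r \<and> p \<in> AA i b")
      case True
      then obtain i b where b: "(b, f i) \<in> r" "p \<in> AA i b" by blast
      have pb: "p \<in> A b" using Ab[OF nx[OF b(1)]] b by blast
      obtain b0 where b0: "(b0, x) \<in> r" "p \<in> A b0" "\<forall>g. wlt r g b0 \<longrightarrow> p \<notin> A g"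
        using first_entry[where A=A, OF wo lefx(1)[OF b(1)] pb] by blast
      have "(b0, f i) \<in> r" by (rule first_below[where A=A, OF wo b0(2,3) field_of[OF b0(1)] pb b(1)])
      then have wb0: "wlt r b0 x" and b0x: "b0 \<noteq> x" using lefx nx by blast+
      obtain i0 where i0: "(b0, f i0) \<in> r" "p \<in> AA i0 b0" using b0(2) Ab[OF b0x] by blast
      have fi0: "\<forall>g. wlt r g b0 \<longrightarrow> p \<notin> AA i0 g"
      proof (intro allI impI)
        fix g assume g: "wlt r g b0"
        then have "(g, f i0) \<in> r" using wo_trans[OF wo] i0(1) unfolding wlt_def by blast
        then have "AA i0 g \<subseteq> A g" using Ab[OF nx] by blast
        then show "p \<notin> AA i0 g" using b0(3) g by blast
      qed
      have pU: "p \<in> UU i0" using AAU[of i0] i0 by blast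
      have "p \<in> Dset r (AA i0) (f i0) \<longleftrightarrow> rpar r b0 \<noteq> 1"
        by (rule Dset_odd[OF wo rf i0 fi0])
      then have k1: "p \<in> SS i0 \<longleftrightarrow> rpar r b0 = 1" using AAD[of i0] pU by blast
      have k2: "p \<in> Dset r A x \<longleftrightarrow> rpar r b0 = 1"
        using Dset_mem[OF wo b0] wb0 rx rpar01[of r b0] by auto
      have k3: "p \<in> S \<longleftrightarrow> p \<in> SS i0" using h(3,4) pU by blast
      show ?thesis using k1 k2 k3 by simp
    next
      case False
      then have "p \<notin> UU i" for i using AAU by blast
      then have "p \<notin> S" using h(4) SU by blast
      moreover have "p \<notin> Dset r A x"
      proof
        assume "p \<in> Dset r A x"
        then obtain b where b: "wlt r b x" "p \<in> A b" unfolding Dset_def by blast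
        then have "b \<noteq> x" unfolding wlt_def by blast
        then show False using b(2) Ab False by blast
      qed
      ultimately show ?thesis by simp
    qed
    show "(S,U) \<in> GD L r x" unfolding GD_iff
      by (rule exI[of _ A]) (use AL eqU eqS in blast)
  qed
qed



lemma lab_single0: "lab single0" unfolding lab_def single0_def by simp

lemma main_inv:
  fixes L :: "'x set set" and r :: "('a \<times> 'a) set" and t :: "'a \<Rightarrow> ltree"
  assumes base: "is_base X L" and wo: "Well_order r" and tf: "Tfam r t"
  shows "x \<in> Field r \<Longrightarrow> lab (t x) \<and> Cov (fst (t x)) \<and> (\<forall>S U. (S,U) \<in> Gen L (t x) \<longleftrightarrow> (S,U) \<in> GD L r x)"
proof (induction x rule: wf_induct_rule[OF conjunct2[OF wo[unfolded well_order_on_def]]])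
  case (1 x)
  have IH: "lab (t y) \<and> Cov (fst (t y)) \<and> (\<forall>S U. (S,U) \<in> Gen L (t y) \<longleftrightarrow> (S,U) \<in> GD L r y)"
    if "wlt r y x" for y
    using 1(1)[of y] that wlt_field[OF that] unfolding wlt_def by blast
  have T: "(is_zero_el r x \<longrightarrow> treq (t x) single0) \<and>
     (\<forall>y. immpred r y x \<longrightarrow> treq (t x) (p0_one (flip (t y)))) \<and>
     (is_limit_el r x \<longrightarrow> (\<exists>f :: nat \<Rightarrow> 'a.
         (\<forall>i. wlt r (f i) x \<and> is_odd_el r (f i) \<and> wlt r (f i) (f (Suc i))) \<and>
         (\<forall>y. wlt r y x \<longrightarrow> (\<exists>i. wlt r y (f i))) \<and>
         treq (t x) (p0_seq (\<lambda>i. flip (t (f i))))))"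
    using tf 1(2) unfolding Tfam_def by blast
  consider "is_zero_el r x" | y where "immpred r y x" | "is_limit_el r x"
    unfolding is_zero_el_def is_limit_el_def by blast
  then show ?case
  proof cases
    case 1
    then have tr: "treq (t x) single0" using T by blast
    have "lab (t x)" by (rule lab_treq[OF tr lab_single0])
    moreover have "Cov (fst (t x))" using tr Cov_single unfolding treq_def single0_def by simp
    moreover have "(S,U) \<in> Gen L (t x) \<longleftrightarrow> (S,U) \<in> GD L r x" for S U
      using Gen_treq[OF tr, of L] Gen_single0[of S U L] GD_zero[OF wo 1 \<open>x \<in> Field r\<close>, of S U L] by simp
    ultimately show ?thesis by blast
  next
    case (2 y)
    then have tr: "treq (t x) (p0_one (flip (t y)))" using T by blast
    have yx: "wlt r y x" using 2 unfolding immpred_def by blast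
    note ih = IH[OF yx]
    have labf: "lab (flip (t y))" by (rule lab_flip)
    have covf: "Cov (fst (flip (t y)))" using ih Cov_flip by simp
    have "lab (t x)" by (rule lab_treq[OF tr lab_p0one[OF labf]])
    moreover have "Cov (fst (t x))" using tr Cov_p0one[OF covf] unfolding treq_def by simp
    moreover have "(S,U) \<in> Gen L (t x) \<longleftrightarrow> (S,U) \<in> GD L r x" for S U
    proof -
      have "(S,U) \<in> Gen L (t x) \<longleftrightarrow> (S,U) \<in> Gen L (p0_one (flip (t y)))"
        by (subst Gen_treq[OF tr]) (rule refl)
      also have "\<dots> \<longleftrightarrow> (\<exists>U0 B0. B0 \<in> L \<and> (S,U0) \<in> Gen L (flip (t y)) \<and> U = B0 \<union> U0)"
        by (rule Gen_p0one[OF labf covf])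
      also have "\<dots> \<longleftrightarrow> (\<exists>U0 B0. B0 \<in> L \<and> S \<subseteq> U0 \<and> (U0 - S, U0) \<in> GD L r y \<and> U = B0 \<union> U0)"
        using Gen_flip[OF ih[THEN conjunct1], of S _ L] ih by auto
      also have "\<dots> \<longleftrightarrow> (S,U) \<in> GD L r x" by (rule GD_succ[OF wo 2, symmetric])
      finally show ?thesis .
    qed
    ultimately show ?thesis by blast
  next
    case 3
    then obtain f :: "nat \<Rightarrow> 'a" where f: "\<forall>i. wlt r (f i) x \<and> is_odd_el r (f i) \<and> wlt r (f i) (f (Suc i))"
      and cof: "\<forall>y. wlt r y x \<longrightarrow> (\<exists>i. wlt r y (f i))"
      and tr: "treq (t x) (p0_seq (\<lambda>i. flip (t (f i))))" using T by blast
    have ih: "lab (t (f i)) \<and> Cov (fst (t (f i))) \<and> (\<forall>S U. (S,U) \<in> Gen L (t (f i)) \<longleftrightarrow> (S,U) \<in> GD L r (f i))" for i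
      using IH f by blast
    have labf: "lab (flip (t (f i)))" for i by (rule lab_flip)
    have covf: "Cov (fst (flip (t (f i))))" for i using ih Cov_flip by simp
    have "lab (t x)" by (rule lab_treq[OF tr lab_p0seq[OF labf]])
    moreover have "Cov (fst (t x))" using tr Cov_p0seq[OF covf] unfolding treq_def by simp
    moreover have "(S,U) \<in> Gen L (t x) \<longleftrightarrow> (S,U) \<in> GD L r x" for S U
    proof -
      have eq: "(SS,UU) \<in> Gen L (flip (t (f i))) \<longleftrightarrow> SS \<subseteq> UU \<and> (UU - SS, UU) \<in> GD L r (f i)" for SS UU i
        using Gen_flip[OF ih[THEN conjunct1], of SS UU L] ih by auto
      have "(S,U) \<in> Gen L (t x) \<longleftrightarrow> (S,U) \<in> Gen L (p0_seq (\<lambda>i. flip (t (f i))))"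
        by (subst Gen_treq[OF tr]) (rule refl)
      also have "\<dots> \<longleftrightarrow> (\<exists>SS UU B0. B0 \<in> L \<and> (\<forall>i. (SS i, UU i) \<in> Gen L (flip (t (f i)))) \<and> (\<forall>i j. SS i \<inter> UU j \<subseteq> SS j)
        \<and> S = (\<Union>i. SS i) \<and> U = B0 \<union> (\<Union>i. UU i))"
        by (rule Gen_p0seq[OF labf covf])
      also have "\<dots> \<longleftrightarrow> (\<exists>SS UU B0. B0 \<in> L \<and> (\<forall>i. SS i \<subseteq> UU i \<and> (UU i - SS i, UU i) \<in> GD L r (f i))
      \<and> (\<forall>i j. SS i \<inter> UU j \<subseteq> SS j) \<and> S = (\<Union>i. SS i) \<and> U = B0 \<union> (\<Union>i. UU i))"
        by (simp only: eq)
      also have "\<dots> \<longleftrightarrow> (S,U) \<in> GD L r x" by (rule GD_limit[OF wo 3 f cof base, symmetric])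
      finally show ?thesis .
    qed
    ultimately show ?thesis by blast
  qed
qed



lemma all2: "(\<forall>i<(2::nat). P i) \<longleftrightarrow> P 0 \<and> P 1"
  by (auto simp: numeral_2_eq_2 less_Suc_eq)

lemma Lforest_iff: "A \<in> Lforest 2 X L P tle c \<longleftrightarrow> A \<in> X \<rightarrow>\<^sub>E {..<2} \<and> (\<exists>B. (\<forall>p\<in>P. B p \<in> L) \<and> (\<Union>p\<in>P. B p) = X
   \<and> {x\<in>X. A x = 0} = (\<Union>p\<in>{p\<in>P. c p = 0}. reg P B p) \<and> {x\<in>X. A x = 1} = (\<Union>p\<in>{p\<in>P. c p = 1}. reg P B p))"
  unfolding Lforest_def reg_def all2 by simp

lemma Lforest_Gen:
  fixes L :: "'x set set"
  assumes lab: "lab T"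
  shows "Lforest 2 X L (fst T) tle (snd T) = (\<lambda>S. \<lambda>x\<in>X. if x \<in> S then 1 else 0) ` {S. (S, X) \<in> Gen L T}"
proof -
  have lb: "\<forall>p\<in>fst T. snd T p \<le> 1" using lab unfolding lab_def by blast
  have c0: "{p\<in>fst T. snd T p = 0} = {p\<in>fst T. snd T p \<noteq> 1}" using lb by force
  show ?thesis
  proof (intro equalityI subsetI)
    fix A :: "'x \<Rightarrow> nat" assume "A \<in> Lforest 2 X L (fst T) tle (snd T)"
    then have A1: "A \<in> X \<rightarrow>\<^sub>E {..<2}" and "\<exists>B. (\<forall>p\<in>fst T. B p \<in> L) \<and> (\<Union>p\<in>fst T. B p) = X
      \<and> {x\<in>X. A x = 0} = (\<Union>p\<in>{p\<in>fst T. snd T p = 0}. reg (fst T) B p)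
      \<and> {x\<in>X. A x = 1} = (\<Union>p\<in>{p\<in>fst T. snd T p = 1}. reg (fst T) B p)"
      unfolding Lforest_iff by auto
    then obtain B where A: "\<forall>p\<in>fst T. B p \<in> L" "(\<Union>p\<in>fst T. B p) = X"
      "{x\<in>X. A x = 0} = (\<Union>p\<in>{p\<in>fst T. snd T p = 0}. reg (fst T) B p)"
      "{x\<in>X. A x = 1} = (\<Union>p\<in>{p\<in>fst T. snd T p = 1}. reg (fst T) B p)"
      by (elim exE conjE)
    let ?S = "{x\<in>X. A x = 1}"
    have A01: "A x = 0 \<or> A x = 1" if "x \<in> X" for x using A1 that by (auto simp: PiE_def Pi_def)
    have XS: "X - ?S = {x\<in>X. A x = 0}" using A01 by auto
    have "(?S, X) \<in> Gen L T"
    proof (rule GenI[where B=B])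
      show "\<forall>p\<in>fst T. B p \<in> L" by (rule A(1))
      show "X = (\<Union>p\<in>fst T. B p)" using A(2) by simp
      show "?S = (\<Union>p\<in>{p\<in>fst T. snd T p = 1}. reg (fst T) B p)" by (rule A(4))
      show "X - ?S = (\<Union>p\<in>{p\<in>fst T. snd T p \<noteq> 1}. reg (fst T) B p)" using XS A(3) c0 by simp
    qed
    moreover have "A = (\<lambda>x\<in>X. if x \<in> ?S then 1 else 0)"
    proof
      fix x show "A x = (\<lambda>x\<in>X. if x \<in> ?S then 1 else 0) x"
      proof (cases "x \<in> X")
        case True then show ?thesis using A01[of x] by auto
      next
        case False then show ?thesis using A1 by (auto simp: PiE_def extensional_def)
      qed
    qed
    ultimately show "A \<in> (\<lambda>S. \<lambda>x\<in>X. if x \<in> S then 1 else 0) ` {S. (S, X) \<in> Gen L T}" by blast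
  next
    fix A :: "'x \<Rightarrow> nat" assume "A \<in> (\<lambda>S. \<lambda>x\<in>X. if x \<in> S then 1 else 0) ` {S. (S, X) \<in> Gen L T}"
    then obtain S where S: "(S, X) \<in> Gen L T" and Aeq: "A = (\<lambda>x\<in>X. if x \<in> S then 1 else 0)" by blast
    have SX: "S \<subseteq> X" using Gen_sub[OF S] .
    obtain B where B: "\<forall>p\<in>fst T. B p \<in> L" "X = (\<Union>p\<in>fst T. B p)"
      "S = (\<Union>p\<in>{p\<in>fst T. snd T p = 1}. reg (fst T) B p)"
      "X - S = (\<Union>p\<in>{p\<in>fst T. snd T p \<noteq> 1}. reg (fst T) B p)" using S by (rule GenE)
    have e0: "{x\<in>X. A x = 0} = X - S" unfolding Aeq by auto
    have e1: "{x\<in>X. A x = 1} = S" unfolding Aeq using SX by auto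
    have "A \<in> X \<rightarrow>\<^sub>E {..<2}" unfolding Aeq by auto
    moreover have "(\<forall>p\<in>fst T. B p \<in> L) \<and> (\<Union>p\<in>fst T. B p) = X
      \<and> {x\<in>X. A x = 0} = (\<Union>p\<in>{p\<in>fst T. snd T p = 0}. reg (fst T) B p)
      \<and> {x\<in>X. A x = 1} = (\<Union>p\<in>{p\<in>fst T. snd T p = 1}. reg (fst T) B p)"
      using B e0 e1 c0 by simp
    ultimately show "A \<in> Lforest 2 X L (fst T) tle (snd T)"
      unfolding Lforest_iff by blast
  qed
qed

lemma GD_Dclass:
  fixes L :: "'x set set"
  assumes base: "is_base X L" and wo: "Well_order r" and x0: "x0 \<in> Field r"
  shows "{S. (S, X) \<in> GD L r x0} = Dclass L r x0"
proof -
  have dc: "Dclass L r x0 = {Dset r A x0 | A. \<forall>b. wlt r b x0 \<longrightarrow> A b \<in> L}"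
    unfolding Dclass_def Dset_def ..
  have xx: "(x0,x0) \<in> r" using wo_refl[OF wo x0] .
  have LX: "L \<subseteq> Pow X" "X \<in> L" using base unfolding is_base_def by auto
  show ?thesis unfolding dc
  proof (intro equalityI subsetI)
    fix S assume "S \<in> {S. (S, X) \<in> GD L r x0}"
    then obtain A where A: "\<forall>b. (b,x0)\<in>r \<longrightarrow> A b \<in> L" "S = Dset r A x0"
      unfolding GD_iff mem_Collect_eq by blast
    then show "S \<in> {Dset r A x0 | A. \<forall>b. wlt r b x0 \<longrightarrow> A b \<in> L}" unfolding wlt_def by blast
  next
    fix S assume "S \<in> {Dset r A x0 | A. \<forall>b. wlt r b x0 \<longrightarrow> A b \<in> L}"
    then obtain A where A: "\<forall>b. wlt r b x0 \<longrightarrow> A b \<in> L" "S = Dset r A x0" by blast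
    define A' where "A' = A(x0 := X)"
    have D: "Dset r A' x0 = Dset r A x0"
      by (rule Dset_cong[OF wo]) (auto simp: A'_def wlt_def)
    have AL: "\<forall>b. (b,x0)\<in>r \<longrightarrow> A' b \<in> L" using A(1) LX(2) unfolding A'_def wlt_def by auto
    have U: "X = (\<Union>b\<in>{b. (b,x0)\<in>r}. A' b)"
    proof
      show "X \<subseteq> (\<Union>b\<in>{b. (b,x0)\<in>r}. A' b)" using xx unfolding A'_def by auto
      show "(\<Union>b\<in>{b. (b,x0)\<in>r}. A' b) \<subseteq> X" using AL LX(1) by blast
    qed
    have "(S, X) \<in> GD L r x0" unfolding GD_iff
      by (rule exI[of _ A']) (use AL D A(2) U in simp)
    then show "S \<in> {S. (S, X) \<in> GD L r x0}" by simp
  qed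
qed

theorem proposition4p10:
  fixes X :: "'x set" and L :: "'x set set"
    and r :: "('a \<times> 'a) set" and t :: "'a \<Rightarrow> ltree" and x0 :: 'a
  assumes "is_base X L"
    and "Well_order r" and "countable (Field r)"
    and "Tfam r t"
    and "x0 \<in> Field r"
  shows "Lforest 2 X L (fst (t x0)) tle (snd (t x0))
           = (\<lambda>A. \<lambda>x\<in>X. if x \<in> A then 1 else 0) ` Dclass L r x0"
proof -
  have inv: "lab (t x0) \<and> Cov (fst (t x0)) \<and> (\<forall>S U. (S,U) \<in> Gen L (t x0) \<longleftrightarrow> (S,U) \<in> GD L r x0)"
    by (rule main_inv[OF assms(1,2,4,5)])
  then have "{S. (S, X) \<in> Gen L (t x0)} = {S. (S, X) \<in> GD L r x0}" by blast
  also have "\<dots> = Dclass L r x0" by (rule GD_Dclass[OF assms(1,2,5)])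
  finally show ?thesis using Lforest_Gen[of "t x0" X L] inv by simp
qed


end
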